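(* Let $\nu>0$ and $\lambda>0$. For $t>\lambda$ define $$K_1(t;\lambda)=\int_\lambda^t\frac{du}{u^{\nu+1}}\Big\{\frac{1}{(t+\lambda-u)^{\nu}}-\frac{1}{t^{\nu}}\Big\},\qquad K_2(t;\lambda)=\int_\lambda^t\frac{du}{u^{\nu+1}(t+\lambda-u)^{(2\nu)\wedge(\nu+1)}}.$$ Then (1) as $t\to\infty$, $$K_1(t;\lambda)=\frac{1}{(t+\lambda)^{2\nu}}\int_1^{t/\lambda}\frac{(v+1)^{2\nu}-v^{2\nu}}{v^{\nu+1}}\,dv+O(t^{-\nu-1});$$ (2) $\displaystyle\limsup_{t\to\infty}t^{(2\nu)\wedge(\nu+1)}K_2(t;\lambda)\le\frac{2}{\nu\lambda^{\nu}}$.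
   Context: $x\wedge y=\min\{x,y\}$. *)

theory Defs
  imports "HOL-Analysis.Analysis" "HOL-Library.Landau_Symbols"
begin

definition K1 :: "real \<Rightarrow> real \<Rightarrow> real \<Rightarrow> real" where
  "K1 nu lam t = integral {lam..t}
     (\<lambda>u. (1 / u powr (nu + 1)) * (1 / (t + lam - u) powr nu - 1 / t powr nu))"

definition K2 :: "real \<Rightarrow> real \<Rightarrow> real \<Rightarrow> real" where
  "K2 nu lam t = integral {lam..t}
     (\<lambda>u. 1 / (u powr (nu + 1) * (t + lam - u) powr (min (2 * nu) (nu + 1))))"

end

theory Submission
  imports Defs "HOL-Real_Asymp.Real_Asymp"
begin

lemma ftc_real:
  fixes F f :: "real \<Rightarrow> real"
  assumes "a \<le> b" "\<And>x. x \<in> {a..b} \<Longrightarrow> (F has_real_derivative f x) (at x)"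
  shows "(f has_integral (F b - F a)) {a..b}"
  using assms by (intro fundamental_theorem_of_calculus)
    (auto simp: has_real_derivative_iff_has_vector_derivative[symmetric] intro: has_field_derivative_at_within)

lemma int_left:
  fixes p l t :: real
  assumes "p > 0" "0 < l" "l \<le> t"
  shows "((\<lambda>u. u powr (-p-1)) has_integral ((l powr (-p) - t powr (-p))/p)) {l..t}"
proof -
  have "((\<lambda>u. u powr (-p-1)) has_integral (- (t powr (-p)) / p - - (l powr (-p)) / p)) {l..t}"
  proof (rule ftc_real[OF assms(3), where F = "\<lambda>u. - (u powr (-p)) / p"])
    fix x assume "x \<in> {l..t}"
    hence x: "x > 0" using assms by auto
    have "((\<lambda>u. u powr (-p)) has_real_derivative (-p) * x powr (-p-1)) (at x)"
      using has_real_derivative_powr[OF x, of "-p"] by simp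
    hence "((\<lambda>u. - (u powr (-p)) / p) has_real_derivative (- ((-p) * x powr (-p-1))) / p) (at x)"
      by (intro DERIV_cdivide DERIV_minus)
    thus "((\<lambda>u. - (u powr (-p)) / p) has_real_derivative x powr (-p-1)) (at x)"
      by (rule DERIV_cong) (use assms in auto)
  qed
  thus ?thesis by (simp add: diff_divide_distrib)
qed

lemma int_right:
  fixes p l t :: real
  assumes "p > 0" "0 < l" "l \<le> t"
  shows "((\<lambda>u. (t + l - u) powr (-p-1)) has_integral ((l powr (-p) - t powr (-p))/p)) {l..t}"
proof -
  have "((\<lambda>u. (t + l - u) powr (-p-1)) has_integral ((t + l - t) powr (-p) / p - (t + l - l) powr (-p) / p)) {l..t}"
  proof (rule ftc_real[OF assms(3), where F = "\<lambda>u. (t + l - u) powr (-p) / p"])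
    fix x assume "x \<in> {l..t}"
    hence x: "t + l - x > 0" using assms by auto
    have "((\<lambda>u. t + l - u) has_real_derivative -1) (at x)"
      by (auto intro!: derivative_eq_intros)
    from DERIV_chain2[OF has_real_derivative_powr[OF x, of "-p"] this]
    have "((\<lambda>u. (t + l - u) powr (-p)) has_real_derivative (-p) * (t+l-x) powr (-p-1) * -1) (at x)"
      by simp
    hence "((\<lambda>u. (t + l - u) powr (-p) / p) has_real_derivative ((-p) * (t+l-x) powr (-p-1) * -1) / p) (at x)"
      by (intro DERIV_cdivide)
    thus "((\<lambda>u. (t + l - u) powr (-p) / p) has_real_derivative (t + l - x) powr (-p-1)) (at x)"
      by (rule DERIV_cong) (use assms in auto)
  qed
  thus ?thesis by (simp add: diff_divide_distrib)
qed

lemma powr_atoms: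
  fixes x n :: real assumes "x > 0"
  shows "x powr (-n-1) = 1/(x powr n * x)" "x powr (n+1) = x powr n * x" "x powr (-n) = 1/x powr n"
    "x powr (n-1) = x powr n / x" "x powr (2*n) = (x powr n)^2" "x powr (-(2*n)) = 1/(x powr n)^2"
    "x powr (1-2*n) = x/(x powr n)^2"
proof -
  show a: "x powr (n+1) = x powr n * x" using assms by (simp add: powr_add)
  show "x powr (-n-1) = 1/(x powr n * x)"
  proof -
    have "-n-1 = -(n+1)" by simp
    hence "x powr (-n-1) = 1 / x powr (n+1)" by (simp only: powr_minus_divide)
    thus ?thesis using a by simp
  qed
  show "x powr (-n) = 1/x powr n" by (simp add: powr_minus_divide)
  show "x powr (n-1) = x powr n / x" using assms by (simp add: powr_diff)
  show b: "x powr (2*n) = (x powr n)^2" by (simp add: power2_eq_square powr_add[symmetric])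
  show "x powr (-(2*n)) = 1/(x powr n)^2" using b by (simp add: powr_minus_divide)
  show "x powr (1-2*n) = x/(x powr n)^2" using b assms by (simp add: powr_diff)
qed

lemma alg1:
  fixes A W U w b :: real
  assumes "A > 0" "W > 0" "U > 0" "w > 0" "b > 0"
  shows "1/(W*w)*(1/U) + 1/(U*b)*(1/W) = 1/A^2 * ((w+b)/b^2 * ((A^2/U^2 - W^2/U^2)/(W*w/(U*b)))) + (w+b)/A^2*(W/w)*(1/(U*b))"
  using assms by (simp add: field_simps power2_eq_square)

lemma alg2:
  fixes A X U x b n :: real
  assumes "A > 0" "X > 0" "U > 0" "x > 0" "b > 0" "n > 0"
  shows "((n * (X/x)) * (1/U) + ((-n) * (1/(U*b)) * -1) * X) / (n * A^2) = (x+b)/A^2*(X/x)*(1/(U*b))"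
  using assms by (simp add: field_simps power2_eq_square)

lemma K1_identity:
  fixes n l t :: real
  assumes n: "n > 0" and l: "l > 0" and t: "t > l"
  shows "K1 n l t - (1 / (t + l) powr (2 * n)) * integral {1..t / l} (\<lambda>v. ((v + 1) powr (2 * n) - v powr (2 * n)) / v powr (n + 1))
    = (t/l) powr n / (n * (t+l) powr (2*n)) - 1 / (n * (t+l) powr (2*n)) - t powr (-n) * ((l powr (-n) - t powr (-n)) / n)"
proof -
  define a where "a = t + l"
  define c where "c = a / 2"
  define f where "f u = u powr (-n-1) * (a-u) powr (-n)" for u
  define h where "h v = ((v + 1) powr (2 * n) - v powr (2 * n)) / v powr (n + 1)" for v :: real
  define M where "M = integral {1..t/l} h"
  define g where "g w = w / (a - w)" for w
  define g' where "g' w = a / (a-w)^2" for w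
  define q where "q w = a powr (1-2*n) * w powr (n-1) * (a-w) powr (-n-1)" for w
  define G where "G w = w powr n * (a-w) powr (-n) / (n * a powr (2*n))" for w
  have lc: "l < c" and ct: "c < t" and apos: "a > 0" using t l by (auto simp: a_def c_def)
  have ac: "a - c = c" unfolding c_def by simp
  have at: "a - t = l" unfolding a_def by simp
  have contf: "continuous_on {l..t} f" unfolding f_def using t l
    by (intro continuous_intros) (auto simp: a_def)
  have intf2: "f integrable_on {c..t}"
    by (rule integrable_continuous_interval, rule continuous_on_subset[OF contf]) (use lc in auto)
  have cont': "continuous_on {l..c} f" by (rule continuous_on_subset[OF contf]) (use ct in auto)
  have intf1: "f integrable_on {l..c}"
    by (rule integrable_continuous_interval[OF cont'])
  have refl: "((\<lambda>w. f (a - w)) has_integral integral {l..c} f) {c..t}"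
  proof -
    have "((\<lambda>w. (-1) *\<^sub>R f (a - w)) has_integral (integral {a - c..a - t} f - integral {a - t..a - c} f)) {c..t}"
    proof (rule has_integral_substitution_general[where s="{}" and c=l and d=c and g="\<lambda>w. a - w" and g'="\<lambda>_. -1"])
      show "(\<lambda>w. a - w) ` {c..t} \<subseteq> {l..c}" using ct lc by (auto simp: a_def c_def field_simps)
    qed (use ct cont' in \<open>auto intro!: derivative_eq_intros continuous_intros\<close>)
    moreover note ac at
    moreover have "integral {c..l} f = 0" using lc by simp
    ultimately have "((\<lambda>w. (-1) *\<^sub>R f (a - w)) has_integral (- integral {l..c} f)) {c..t}" by simp
    from has_integral_neg[OF this] show ?thesis by simp
  qed
  have sum: "((\<lambda>w. f w + f (a-w)) has_integral (integral {c..t} f + integral {l..c} f)) {c..t}"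
    by (rule has_integral_add[OF integrable_integral[OF intf2] refl])
  have comb: "(f has_integral (integral {l..c} f + integral {c..t} f)) {l..t}"
    by (rule has_integral_combine[OF _ _ integrable_integral[OF intf1] integrable_integral[OF intf2]]) (use lc ct in auto)
  have Iv: "(f has_integral integral {c..t} (\<lambda>w. f w + f (a - w))) {l..t}"
    using comb integral_unique[OF sum] by (simp add: add.commute)
  have gc: "g c = 1" and gt: "g t = t / l" using apos lc l by (auto simp: g_def ac at)
  have contH: "continuous_on {1..t/l} h" unfolding h_def by (intro continuous_intros) auto
  have sub: "((\<lambda>w. g' w *\<^sub>R h (g w)) has_integral integral {g c..g t} h) {c..t}"
  proof (rule has_integral_substitution[where c=1 and d="t/l"])
    show "c \<le> t" using ct by simp
    show "g c \<le> g t" using gc gt t l by simp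
    show "continuous_on {1..t / l} h" by (rule contH)
    show "g ` {c..t} \<subseteq> {1..t / l}"
    proof
      fix y assume "y \<in> g ` {c..t}"
      then obtain w where w: "c \<le> w" "w \<le> t" and y: "y = g w" by auto
      have pos: "a - w \<ge> l" using w by (auto simp: a_def)
      have "1 \<le> w / (a - w)" using w pos l by (auto simp: c_def field_simps)
      moreover have "w / (a - w) \<le> t / l" by (rule frac_le) (use w pos l lc in auto)
      ultimately show "y \<in> {1..t/l}" by (simp add: y g_def)
    qed
    fix x assume "x \<in> {c..t}"
    hence "a - x > 0" using l by (auto simp: a_def)
    show "(g has_real_derivative g' x) (at x within {c..t})" unfolding g_def g'_def
      by (rule derivative_eq_intros refl | use \<open>a - x > 0\<close> in force)+
         (use \<open>a - x > 0\<close> in \<open>simp add: field_simps power2_eq_square\<close>)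
  qed
  have Apos: "a powr n > 0" using apos by simp
  have pt: "f w + f (a - w) = a powr (-(2*n)) * (g' w *\<^sub>R h (g w)) + q w" if w: "w \<in> {c..t}" for w
  proof -
    have w0: "w > 0" and aw: "a - w > 0" using w lc l by (auto simp: a_def)
    have W: "w powr n > 0" and U: "(a - w) powr n > 0" using w0 aw by auto
    have gw1: "g w + 1 = a / (a - w)" using aw by (simp add: g_def field_simps)
    have "h (g w) = ((a/(a-w)) powr (2*n) - (w/(a-w)) powr (2*n)) / (w/(a-w)) powr (n+1)"
      by (simp add: h_def gw1) (simp add: g_def)
    also have "\<dots> = ((a powr n)^2/((a-w) powr n)^2 - (w powr n)^2/((a-w) powr n)^2) / (w powr n * w / ((a-w) powr n * (a-w)))"
      using w0 aw apos by (simp add: powr_divide powr_atoms power_divide)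
    finally have hg: "h (g w) = \<dots>" .
    have fw: "f w = 1/(w powr n * w) * (1/(a-w) powr n)" by (simp add: f_def powr_atoms[OF aw] powr_atoms[OF w0])
    have fw': "f (a - w) = 1/((a-w) powr n * (a-w)) * (1/w powr n)" by (simp add: f_def powr_atoms[OF aw] powr_atoms[OF w0])
    have qw: "q w = a/(a powr n)^2 * (w powr n / w) * (1/((a-w) powr n * (a-w)))"
      by (simp add: q_def powr_atoms[OF aw] powr_atoms[OF w0] powr_atoms[OF apos])
    have ap: "a powr (-(2*n)) = 1/(a powr n)^2" by (simp add: powr_atoms apos)
    show ?thesis unfolding fw fw' qw ap hg g'_def
      using alg1[OF Apos W U w0 aw] by simp
  qed
  have dG: "(G has_real_derivative q x) (at x)" if x: "x \<in> {c..t}" for x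
  proof -
    have x0: "x > 0" and ax: "a - x > 0" using x lc l by (auto simp: a_def)
    have X: "x powr n > 0" and U: "(a - x) powr n > 0" using x0 ax by auto
    have d1: "((\<lambda>w. w powr n) has_real_derivative n * x powr (n-1)) (at x)"
      by (rule has_real_derivative_powr[OF x0])
    have dl: "((\<lambda>w. a - w) has_real_derivative -1) (at x)" by (auto intro!: derivative_eq_intros)
    have d2: "((\<lambda>w. (a-w) powr (-n)) has_real_derivative (-n) * (a-x) powr (-n-1) * -1) (at x)"
      using DERIV_chain2[OF has_real_derivative_powr[OF ax, of "-n"] dl] by simp
    have d3: "((\<lambda>w. w powr n * (a-w) powr (-n) / (n * a powr (2*n))) has_real_derivative
       ((n * x powr (n-1)) * (a-x) powr (-n) + ((-n) * (a-x) powr (-n-1) * -1) * x powr n) / (n * a powr (2*n))) (at x)"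
      by (intro DERIV_cdivide DERIV_mult d1 d2)
    have "((n * x powr (n-1)) * (a-x) powr (-n) + ((-n) * (a-x) powr (-n-1) * -1) * x powr n) / (n * a powr (2*n)) = q x"
      unfolding q_def using alg2[OF Apos X U x0 ax n]
      by (simp add: powr_atoms[OF ax] powr_atoms[OF x0] powr_atoms[OF apos])
    with d3 show ?thesis unfolding G_def by simp
  qed
  have Gint: "(q has_integral (G t - G c)) {c..t}"
    by (rule ftc_real) (use ct dG in auto)
  have Gt: "G t = (t/l) powr n / (n * a powr (2*n))" unfolding G_def at using l t
    by (simp add: powr_divide powr_atoms)
  have Gc: "G c = 1 / (n * a powr (2*n))" unfolding G_def ac using lc l
    by (simp add: powr_atoms)
  have sub': "((\<lambda>w. a powr (-(2*n)) * (g' w *\<^sub>R h (g w))) has_integral a powr (-(2*n)) * M) {c..t}"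
    using has_integral_mult_right[OF sub, of "a powr (-(2*n))"] by (simp add: gc gt M_def)
  have "((\<lambda>w. a powr (-(2*n)) * (g' w *\<^sub>R h (g w)) + q w) has_integral (a powr (-(2*n)) * M + (G t - G c))) {c..t}"
    by (rule has_integral_add[OF sub' Gint])
  hence "((\<lambda>w. f w + f (a - w)) has_integral (a powr (-(2*n)) * M + (G t - G c))) {c..t}"
    by (subst has_integral_cong[OF pt]) auto
  hence Ival: "integral {c..t} (\<lambda>w. f w + f (a - w)) = a powr (-(2*n)) * M + (G t - G c)"
    by (rule integral_unique)
  have pm: "x powr (-n-1) = 1 / x powr (n+1)" for x :: real
  proof -
    have "-n-1 = -(n+1)" by simp
    thus ?thesis by (simp only: powr_minus_divide)
  qed
  have K1eq: "K1 n l t = integral {l..t} (\<lambda>u. f u - t powr (-n) * u powr (-n-1))"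
    unfolding K1_def f_def a_def by (simp add: pm powr_minus_divide algebra_simps)
  have hK: "((\<lambda>u. f u - t powr (-n) * u powr (-n-1)) has_integral
      (integral {c..t} (\<lambda>w. f w + f (a-w)) - t powr (-n) * ((l powr (-n) - t powr (-n))/n))) {l..t}"
    by (rule has_integral_diff[OF Iv has_integral_mult_right[OF int_left[OF n l less_imp_le[OF t]]]])
  have K1v: "K1 n l t = a powr (-(2*n)) * M + (G t - G c) - t powr (-n) * ((l powr (-n) - t powr (-n))/n)"
    using K1eq integral_unique[OF hK] Ival by simp
  have ap: "a powr (-(2*n)) = 1 / a powr (2*n)" by (simp add: powr_minus_divide)
  show ?thesis unfolding K1v Gt Gc ap M_def[symmetric] h_def[symmetric] a_def[symmetric]
    by (simp add: field_simps)
qed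

lemma alg3:
  fixes n D l t T L :: real
  assumes "n > 0" "D \<ge> 0" "D \<le> 2*n*l/t" "T \<ge> 1" "L > 0" "t > 0" "l > 0"
  shows "\<bar>(1/n)*D*(1/(T*L) - 1/T^2)\<bar> \<le> 2*l*(1/L+1)*(1/(T*t))"
proof -
  have T0: "T > 0" using assms by simp
  have "1/T^2 \<le> 1/T" using assms T0 by (simp add: field_simps power2_eq_square)
  note b1 = this
  have p1: "0 < 1/(T*L)" "0 < 1/T^2" using T0 assms by auto
  have a1: "\<bar>1/(T*L) - 1/T^2\<bar> \<le> 1/(T*L) + 1/T" using b1 p1 by (intro abs_leI; linarith)
  have "\<bar>(1/n)*D*(1/(T*L) - 1/T^2)\<bar> = (1/n)*D*\<bar>1/(T*L) - 1/T^2\<bar>"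
    using assms by (simp add: abs_mult)
  also have "\<dots> \<le> (1/n)*(2*n*l/t)*(1/(T*L) + 1/T)"
    by (intro mult_mono a1) (use assms T0 in auto)
  also have "\<dots> = 2*l*(1/L+1)*(1/(T*t))" using assms T0 by (simp add: field_simps)
  finally show ?thesis .
qed

lemma alg4:
  fixes T L A n :: real
  assumes "T > 0" "L > 0" "A > 0" "n > 0"
  shows "T / L / (n * A^2) - 1 / (n * A^2) - 1/T * ((1/L - 1/T) / n) = -((1/n)*(1 - T^2/A^2)*(1/(T*L) - 1/T^2))"
  using assms by (simp add: field_simps power2_eq_square)

lemma E_bound:
  fixes n l t :: real
  assumes n: "n > 0" and l: "l > 0" and t1: "t \<ge> 1" and t: "t > l"
  shows "\<bar>(t/l) powr n / (n * (t+l) powr (2*n)) - 1 / (n * (t+l) powr (2*n)) - t powr (-n) * ((l powr (-n) - t powr (-n)) / n)\<bar>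
     \<le> 2*l*(1/l powr n + 1) * t powr (-n-1)"
proof -
  define a where "a = t + l"
  have t0: "t > 0" and apos: "a > 0" using t l by (auto simp: a_def)
  define D where "D = 1 - (t/a) powr (2*n)"
  have "ln (a/t) \<le> a/t - 1" by (rule ln_le_minus_one) (use apos t0 in simp)
  also have "a/t - 1 = l/t" using t0 by (simp add: a_def field_simps)
  finally have lnb: "ln (t/a) \<ge> - (l/t)" using t0 apos by (simp add: ln_div)
  have "(t/a) powr (2*n) = exp (2*n * ln (t/a))" using t0 apos by (simp add: powr_def mult.commute)
  also have "\<dots> \<ge> 1 + 2*n*ln (t/a)" by (rule exp_ge_add_one_self)
  finally have "(t/a) powr (2*n) \<ge> 1 + 2*n*ln (t/a)" .
  moreover have "2*n*ln (t/a) \<ge> 2*n*(-(l/t))" using lnb n by (intro mult_left_mono) auto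
  moreover have "2*n*(-(l/t)) = -(2*n*l/t)" by simp
  ultimately have D1: "D \<le> 2*n*l/t" unfolding D_def by linarith
  have "(t/a) powr (2*n) \<le> 1 powr (2*n)"
    by (rule powr_mono2) (use n t0 apos l in \<open>auto simp: a_def\<close>)
  hence D0: "D \<ge> 0" unfolding D_def by simp
  have T1: "t powr n \<ge> 1" using t1 n by (simp add: ge_one_powr_ge_zero)
  have L0: "l powr n > 0" using l by simp
  have A0: "a powr n > 0" using apos by simp
  have Deq: "D = 1 - (t powr n)^2/(a powr n)^2"
    unfolding D_def by (simp add: powr_divide powr_atoms[OF t0] powr_atoms[OF apos] power_divide)
  have "(t/l) powr n / (n * a powr (2*n)) - 1 / (n * a powr (2*n)) - t powr (-n) * ((l powr (-n) - t powr (-n)) / n)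
     = -((1/n)*D*(1/(t powr n * l powr n) - 1/(t powr n)^2))"
  proof -
    have h1: "(t/l) powr n = t powr n / l powr n" by (simp add: powr_divide)
    have h2: "a powr (2*n) = (a powr n)^2" by (rule powr_atoms[OF apos])
    have h3: "t powr (-n) = 1 / t powr n" "l powr (-n) = 1 / l powr n" by (simp_all add: powr_minus_divide)
    show ?thesis unfolding Deq h1 h2 h3 using T1 L0 A0 n by (intro alg4) auto
  qed
  moreover have "t powr (-n-1) = 1/(t powr n * t)" by (rule powr_atoms[OF t0])
  ultimately show ?thesis using alg3[OF n D0 D1 T1 L0 t0 l] by (simp add: a_def)
qed

lemma powr_split: "x powr p = x powr q * x powr r" if "p = q + r" for x p q r :: real
  using that by (simp add: powr_add)

lemma f2_pt:
  fixes n m s a t u l :: real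
  assumes n: "n > 0" and m: "m > 0" "m \<le> n+1" and s: "s > 0" "a - s > 0"
    and u: "l \<le> u" "u \<le> t" and a: "a = t + l" and l: "l > 0"
  shows "u powr (-n-1) * (a-u) powr (-m) \<le> (a-s) powr (-m) * u powr (-n-1)
     + (a/2) powr (-m) * s powr (-(n/2)) * u powr (-(n/2)-1)
     + (a/2) powr (-m) * s powr (-(n/2)) * (a-u) powr (-(n/2)-1)
     + (a-s) powr (-n-1) * t powr (n+1-m) * (a-u) powr (-n-1)"
    (is "?L \<le> ?T1 + ?T2 + ?T3 + ?T4")
proof -
  have u0: "u > 0" and w0: "a - u > 0" and wt: "a - u \<le> t" using u a l by auto
  have nn: "?T1 \<ge> 0" "?T2 \<ge> 0" "?T3 \<ge> 0" "?T4 \<ge> 0" by simp_all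
  have "?L \<le> ?T1 \<or> ?L \<le> ?T2 \<or> ?L \<le> ?T3 \<or> ?L \<le> ?T4"
  proof (cases "u \<le> s")
    case True
    have "(a-u) powr (-m) \<le> (a-s) powr (-m)"
      by (rule powr_mono2') (use m s True in auto)
    hence "?L \<le> ?T1" using u0 by (simp add: mult.commute mult_left_mono)
    thus ?thesis by blast
  next
    case us: False
    show ?thesis
    proof (cases "u \<ge> a - s")
      case True
      have e1: "u powr (-n-1) \<le> (a-s) powr (-n-1)"
        by (rule powr_mono2') (use n s True in auto)
      have "(a-u) powr (n+1-m) \<le> t powr (n+1-m)"
        by (rule powr_mono2) (use m w0 wt in auto)
      hence e2: "(a-u) powr (-m) \<le> (a-u) powr (-n-1) * t powr (n+1-m)"
        using powr_split[of "-m" "-n-1" "n+1-m" "a-u"] by (simp add: mult_left_mono)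
      have "?L \<le> (a-s) powr (-n-1) * ((a-u) powr (-n-1) * t powr (n+1-m))"
        by (rule mult_mono[OF e1 e2]) auto
      hence "?L \<le> ?T4" by (simp add: mult_ac)
      thus ?thesis by blast
    next
      case ws: False
      show ?thesis
      proof (cases "u \<le> a/2")
        case True
        have e1: "(a-u) powr (-m) \<le> (a/2) powr (-m)"
          by (rule powr_mono2') (use m True u0 in auto)
        have "u powr (-(n/2)) \<le> s powr (-(n/2))"
          by (rule powr_mono2') (use n s us in auto)
        hence e2: "u powr (-n-1) \<le> s powr (-(n/2)) * u powr (-(n/2)-1)"
          using powr_split[of "-n-1" "-(n/2)" "-(n/2)-1" u] by (simp add: mult_right_mono)
        have "?L \<le> (s powr (-(n/2)) * u powr (-(n/2)-1)) * (a/2) powr (-m)"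
          by (rule mult_mono[OF e2 e1]) auto
        hence "?L \<le> ?T2" by (simp add: mult_ac)
        thus ?thesis by blast
      next
        case False
        have e1: "u powr (-n-1) \<le> (a/2) powr (-n-1)"
          by (rule powr_mono2') (use n False u0 w0 in auto)
        have "(a-u) powr (n+1-m) \<le> (a/2) powr (n+1-m)"
          by (rule powr_mono2) (use m w0 False in auto)
        hence e2': "(a-u) powr (-m) \<le> (a-u) powr (-n-1) * (a/2) powr (n+1-m)"
          using powr_split[of "-m" "-n-1" "n+1-m" "a-u"] by (simp add: mult_left_mono)
        hence e2: "(a-u) powr (-m) \<le> (a/2) powr (n+1-m) * (a-u) powr (-n-1)"
          by (simp add: mult.commute)
        have "(a-u) powr (-(n/2)) \<le> s powr (-(n/2))"
          by (rule powr_mono2') (use n s ws in auto)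
        hence e3: "(a-u) powr (-n-1) \<le> s powr (-(n/2)) * (a-u) powr (-(n/2)-1)"
          using powr_split[of "-n-1" "-(n/2)" "-(n/2)-1" "a-u"] by (simp add: mult_right_mono)
        have "?L \<le> (a/2) powr (-n-1) * ((a/2) powr (n+1-m) * (a-u) powr (-n-1))"
          by (rule mult_mono[OF e1 e2]) auto
        also have "\<dots> = (a/2) powr (-m) * (a-u) powr (-n-1)"
          using powr_split[of "-m" "-n-1" "n+1-m" "a/2"] by (simp add: mult_ac)
        also have "\<dots> \<le> (a/2) powr (-m) * (s powr (-(n/2)) * (a-u) powr (-(n/2)-1))"
          by (rule mult_left_mono[OF e3]) simp
        finally have "?L \<le> ?T3" by (simp add: mult_ac)
        thus ?thesis by blast
      qed
    qed
  qed
  thus ?thesis using nn by linarith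
qed

lemma K2_bound:
  fixes n l t :: real
  assumes n: "n > 0" and l: "l > 0" and t1: "t \<ge> 1" and t: "t > l"
  shows "t powr (min (2*n) (n+1)) * K2 n l t \<le>
     (l powr (-n)/n) * ((t/(t+l-sqrt t)) powr (min (2*n) (n+1)) + (t/(t+l-sqrt t)) powr (n+1))
     + 2 * ((2*t/(t+l)) powr (min (2*n) (n+1)) * sqrt t powr (-(n/2)) * (l powr (-(n/2))/(n/2)))"
proof -
  define m where "m = min (2*n) (n+1)"
  define a where "a = t + l"
  define s where "s = sqrt t"
  define J where "J p = (l powr (-p) - t powr (-p))/p" for p
  have m: "m > 0" "m \<le> n+1" using n by (auto simp: m_def)
  have s0: "s > 0" using t1 by (simp add: s_def)
  have "1 \<le> s" using t1 by (simp add: s_def)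
  hence "s * 1 \<le> s * s" using s0 by (intro mult_left_mono) auto
  hence st: "s \<le> t" using t1 by (simp add: s_def)
  have as: "a - s > 0" using st l by (simp add: a_def)
  have t0: "t > 0" and lt: "l \<le> t" using t l by auto
  define c2 where "c2 = (a/2) powr (-m) * s powr (-(n/2))"
  define c4 where "c4 = (a-s) powr (-n-1) * t powr (n+1-m)"
  define G where "G u = (a-s) powr (-m) * u powr (-n-1) + c2 * u powr (-(n/2)-1)
      + c2 * (a-u) powr (-(n/2)-1) + c4 * (a-u) powr (-n-1)" for u
  have n2: "n/2 > 0" using n by simp
  have H: "(G has_integral ((a-s) powr (-m) * J n + c2 * J (n/2) + c2 * J (n/2) + c4 * J n)) {l..t}"
    unfolding G_def J_def
    by (intro has_integral_add has_integral_mult_right int_left[OF n l lt] int_left[OF n2 l lt]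
        int_right[OF n l lt, folded a_def] int_right[OF n2 l lt, folded a_def])
  define f2 where "f2 u = 1 / (u powr (n + 1) * (a - u) powr m)" for u
  have contf: "continuous_on {l..t} f2" unfolding f2_def using t l
    by (intro continuous_intros) (auto simp: a_def)
  have F: "(f2 has_integral K2 n l t) {l..t}"
    unfolding K2_def f2_def[unfolded a_def] m_def[symmetric]
    using integrable_continuous_interval[OF contf] unfolding f2_def a_def by (rule integrable_integral)
  have pm: "x powr (-n-1) = 1 / x powr (n+1)" for x :: real
  proof -
    have "-n-1 = -(n+1)" by simp
    thus ?thesis by (simp only: powr_minus_divide)
  qed
  have K2le: "K2 n l t \<le> (a-s) powr (-m) * J n + c2 * J (n/2) + c2 * J (n/2) + c4 * J n"
  proof (rule has_integral_le[OF F H])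
    fix u assume u: "u \<in> {l..t}"
    have "f2 u = u powr (-n-1) * (a-u) powr (-m)" by (simp add: f2_def pm powr_minus_divide)
    also have "\<dots> \<le> G u" unfolding G_def c2_def c4_def
      by (rule f2_pt[OF n m s0 as _ _ a_def l]) (use u in auto)
    finally show "f2 u \<le> G u" .
  qed
  have Jle: "J p \<le> l powr (-p) / p" if "p > 0" for p
    unfolding J_def using that by (simp add: divide_right_mono)
  have e1: "t powr m * (a-s) powr (-m) = (t/(a-s)) powr m"
    by (simp add: powr_divide powr_minus_divide)
  have e2: "t powr m * (a/2) powr (-m) = (2*t/a) powr m"
  proof -
    have "2*t/a = t/(a/2)" by simp
    thus ?thesis by (simp add: powr_divide powr_minus_divide powr_mult)
  qed
  have e4: "t powr m * c4 = (t/(a-s)) powr (n+1)"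
  proof -
    have "t powr m * t powr (n+1-m) = t powr (n+1)" by (simp add: powr_add[symmetric])
    thus ?thesis unfolding c4_def by (simp add: pm powr_divide mult_ac)
  qed
  have "t powr m * K2 n l t \<le> t powr m * ((a-s) powr (-m) * J n + c2 * J (n/2) + c2 * J (n/2) + c4 * J n)"
    by (rule mult_left_mono[OF K2le]) simp
  also have "\<dots> = (t/(a-s)) powr m * J n + 2 * ((2*t/a) powr m * s powr (-(n/2)) * J (n/2)) + (t/(a-s)) powr (n+1) * J n"
  proof -
    have "t powr m * ((a-s) powr (-m) * J n + c2 * J (n/2) + c2 * J (n/2) + c4 * J n)
      = (t powr m * (a-s) powr (-m)) * J n + 2 * ((t powr m * (a/2) powr (-m)) * s powr (-(n/2)) * J (n/2)) + (t powr m * c4) * J n"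
      unfolding c2_def by (simp add: algebra_simps)
    thus ?thesis unfolding e1 e2 e4 .
  qed
  also have "\<dots> \<le> (t/(a-s)) powr m * (l powr (-n)/n) + 2 * ((2*t/a) powr m * s powr (-(n/2)) * (l powr (-(n/2))/(n/2))) + (t/(a-s)) powr (n+1) * (l powr (-n)/n)"
    by (intro add_mono mult_left_mono Jle n n2 order_refl) auto
  finally show ?thesis unfolding m_def a_def s_def by (simp add: algebra_simps)
qed

theorem lemma3p4:
  fixes nu lam :: real
  assumes "nu > 0" and "lam > 0"
  shows "((\<lambda>t. K1 nu lam t
            - (1 / (t + lam) powr (2 * nu)) *
              integral {1..t / lam} (\<lambda>v. ((v + 1) powr (2 * nu) - v powr (2 * nu)) / v powr (nu + 1)))
          \<in> O[at_top](\<lambda>t. t powr (- nu - 1)))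
         \<and> Limsup at_top (\<lambda>t. ereal (t powr (min (2 * nu) (nu + 1)) * K2 nu lam t))
          \<le> ereal (2 / (nu * lam powr nu))"
proof
  note n = assms(1) and l = assms(2)
  show "(\<lambda>t. K1 nu lam t
            - (1 / (t + lam) powr (2 * nu)) *
              integral {1..t / lam} (\<lambda>v. ((v + 1) powr (2 * nu) - v powr (2 * nu)) / v powr (nu + 1)))
          \<in> O[at_top](\<lambda>t. t powr (- nu - 1))"
  proof (rule bigoI[where c = "2*lam*(1/lam powr nu + 1)"])
    have "eventually (\<lambda>t. t \<ge> max 1 lam + 1) at_top" by (rule eventually_ge_at_top)
    thus "eventually (\<lambda>t. norm (K1 nu lam t
            - (1 / (t + lam) powr (2 * nu)) *
              integral {1..t / lam} (\<lambda>v. ((v + 1) powr (2 * nu) - v powr (2 * nu)) / v powr (nu + 1)))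
         \<le> 2*lam*(1/lam powr nu + 1) * norm (t powr (- nu - 1))) at_top"
    proof eventually_elim
      case (elim t)
      hence t1: "t \<ge> 1" and t: "t > lam" by auto
      show ?case unfolding K1_identity[OF n l t] using E_bound[OF n l t1 t] by simp
    qed
  qed
  define B where "B t = (lam powr (-nu)/nu) * ((t/(t+lam-sqrt t)) powr (min (2*nu) (nu+1)) + (t/(t+lam-sqrt t)) powr (nu+1))
     + 2 * ((2*t/(t+lam)) powr (min (2*nu) (nu+1)) * sqrt t powr (-(nu/2)) * (lam powr (-(nu/2))/(nu/2)))" for t
  have ev: "eventually (\<lambda>t. ereal (t powr (min (2 * nu) (nu + 1)) * K2 nu lam t) \<le> ereal (B t)) at_top"
  proof -
    have "eventually (\<lambda>t. t \<ge> max 1 lam + 1) at_top" by (rule eventually_ge_at_top)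
    thus ?thesis
    proof eventually_elim
      case (elim t)
      hence t1: "t \<ge> 1" and t: "t > lam" by auto
      show ?case unfolding B_def using K2_bound[OF n l t1 t] by simp
    qed
  qed
  have r1: "((\<lambda>t. t/(t+lam-sqrt t)) \<longlongrightarrow> 1) at_top" by real_asymp
  have r2: "((\<lambda>t. 2*t/(t+lam)) \<longlongrightarrow> 2) at_top" by real_asymp
  have r3: "filterlim (\<lambda>t. sqrt t) at_top at_top" by real_asymp
  have r4: "((\<lambda>t. sqrt t powr (-(nu/2))) \<longlongrightarrow> 0) at_top"
    by (rule tendsto_neg_powr[OF _ r3]) (use n in simp)
  have "(B \<longlongrightarrow> (lam powr (-nu)/nu) * (1 powr (min (2*nu) (nu+1)) + 1 powr (nu+1))
     + 2 * (2 powr (min (2*nu) (nu+1)) * 0 * (lam powr (-(nu/2))/(nu/2)))) at_top"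
    unfolding B_def by (intro tendsto_intros r1 r2 r4 tendsto_powr) auto
  hence "(B \<longlongrightarrow> 2 / (nu * lam powr nu)) at_top" using l
    by (simp add: powr_minus_divide field_simps)
  hence "Limsup at_top (\<lambda>t. ereal (B t)) = ereal (2 / (nu * lam powr nu))"
    by (intro lim_imp_Limsup) auto
  with Limsup_mono[OF ev] show "Limsup at_top (\<lambda>t. ereal (t powr (min (2 * nu) (nu + 1)) * K2 nu lam t))
          \<le> ereal (2 / (nu * lam powr nu))" by simp
qed

end
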